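(* Let $L\subset\mathbb{R}^n$ be an $n$-dimensional lattice with basis $b_1,\dots,b_n$, and let $P$ be a Delaunay polytope of $L$ with vertex set $V(P)$ that generates $L$ (i.e. $L$ is the lattice generated by the differences of vertices of $P$). Fix a vertex $v_0\in V(P)$ and, for each $v\in V(P)$, write $v-v_0=\sum_{i=1}^n z_i(v)b_i$ with $z_i(v)\in\mathbb{Z}$. Let $$Y(P)=\Big\{y\in\mathbb{Z}^{V(P)}:\ \sum_{v\in V(P)}y(v)v=0,\ \sum_{v\in V(P)}y(v)=0\Big\}$$ and let $\mathcal{B}(P)$ be the linear space of symmetric real $n\times n$ matrices $(b_{ij})$ satisfying $$\sum_{i,j=1}^n\Big(\sum_{v\in V(P)}y(v)z_i(v)z_j(v)\Big)b_{ij}=0\qquad\text{for all }y\in Y(P).$$ Then $\dim\mathcal{B}(P)$ equals the rank of $P$.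
   Context: A Delaunay polytope of a lattice $L\subset\mathbb{R}^n$ is a polytope whose vertex set is $L\cap S$, where $S=S(c,r)$ is an empty sphere: $\|a-c\|^2\ge r^2$ for all $a\in L$, and $S\cap L$ contains $n+1$ affinely independent points. For a finite set $V$, the hypermetric cone $HYP(V)$ is the set of functions $d:V\times V\to\mathbb{R}$ with $d(u,v)=d(v,u)$, $d(v,v)=0$, and $\sum_{u,v\in V}b_ub_v d(u,v)\le 0$ for all $b\in\mathbb{Z}^V$ with $\sum_v b_v=1$. For a Delaunay polytope $P$, the distance $d_P(u,v)=\|u-v\|^2$ on $V=V(P)$ lies in $HYP(V)$; the rank of $P$ is the dimension of the minimal (by inclusion) face of $HYP(V(P))$ containing $d_P$. *)

theory Defs
  imports "HOL-Analysis.Analysis"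
begin

definition lattice_of_basis :: "('n::finite \<Rightarrow> real^'n) \<Rightarrow> (real^'n) set" where
  "lattice_of_basis b = {(\<Sum>i\<in>UNIV. of_int (z i) *\<^sub>R b i) | z. True}"

definition int_span :: "'a::real_vector set \<Rightarrow> 'a set" where
  "int_span X = {(\<Sum>x\<in>F. of_int (k x) *\<^sub>R x) | F k. finite F \<and> F \<subseteq> X}"

definition delaunay_polytope_vertices :: "(real^'n::finite) set \<Rightarrow> (real^'n) set \<Rightarrow> bool" where
  "delaunay_polytope_vertices L V \<longleftrightarrow>
     (\<exists>c r. (\<forall>a\<in>L. (norm (a - c))\<^sup>2 \<ge> r\<^sup>2) \<and>
            V = {a\<in>L. (norm (a - c))\<^sup>2 = r\<^sup>2} \<and>
            (\<exists>S\<subseteq>V. card S = CARD('n) + 1 \<and> \<not> affine_dependent S))"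

text \<open>Hypermetric cone HYP(V) for a finite index set V (given as a finite type 'v);
  a function d : V \<times> V \<Rightarrow> real is represented as a matrix d$u$v.\<close>
definition hyp_cone :: "(real^'v::finite^'v) set" where
  "hyp_cone = {d. (\<forall>u v. d$u$v = d$v$u) \<and> (\<forall>v. d$v$v = 0) \<and>
      (\<forall>bb::'v \<Rightarrow> int. sum bb UNIV = 1 \<longrightarrow>
          (\<Sum>u\<in>UNIV. \<Sum>v\<in>UNIV. of_int (bb u * bb v) * d$u$v) \<le> 0)}"

definition minimal_face :: "'a::real_vector set \<Rightarrow> 'a \<Rightarrow> 'a set" where
  "minimal_face S x = (THE F. F face_of S \<and> x \<in> F \<and> (\<forall>G. G face_of S \<and> x \<in> G \<longrightarrow> F \<subseteq> G))"

definition delaunay_distance :: "('v::finite \<Rightarrow> real^'n::finite) \<Rightarrow> real^'v^'v" where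
  "delaunay_distance vert = (\<chi> u v. (norm (vert u - vert v))\<^sup>2)"

definition delaunay_rank :: "('v::finite \<Rightarrow> real^'n::finite) \<Rightarrow> nat" where
  "delaunay_rank vert = dim (minimal_face hyp_cone (delaunay_distance vert))"

end

theory Submission
  imports Defs
begin


definition qf :: "real^'n^'n \<Rightarrow> real^'n \<Rightarrow> real" where
  "qf B x = x \<bullet> (B *v x)"

definition hf :: "('v::finite \<Rightarrow> int) \<Rightarrow> real^'v^'v \<Rightarrow> real" where
  "hf \<beta> d = (\<Sum>u\<in>UNIV. \<Sum>v\<in>UNIV. of_int (\<beta> u * \<beta> v) * d$u$v)"

lemma mv_sum: "(B::real^'n^'m) *v (\<Sum>u\<in>S. f u) = (\<Sum>u\<in>S. B *v f u)"
  by (induction S rule: infinite_finite_induct) (auto simp: matrix_vector_right_distrib)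

lemma mv_scale: "(B::real^'n^'m) *v (a *\<^sub>R x) = a *\<^sub>R (B *v x)"
  by (simp add: vec_eq_iff matrix_vector_mult_def sum_distrib_left algebra_simps)

lemma sym_inner:
  assumes "transpose B = B"
  shows "x \<bullet> ((B::real^'n^'n) *v y) = y \<bullet> (B *v x)"
proof -
  have "x \<bullet> (B *v y) = (x v* B) \<bullet> y" by (simp add: dot_lmul_matrix)
  also have "x v* B = transpose B *v x" by (simp add: vector_matrix_mult_def matrix_vector_mult_def transpose_def vec_eq_iff mult.commute)
  finally show ?thesis using assms by (simp add: inner_commute)
qed

lemma qf_diff:
  assumes "transpose B = B"
  shows "qf B (x - y) = qf B x + qf B y - 2 * (x \<bullet> (B *v y))"
  using sym_inner[OF assms, of x y]
  by (simp add: qf_def matrix_vector_right_distrib matrix_vector_mult_diff_distrib inner_diff_left inner_diff_right)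

lemma GQ:
  fixes p :: "'v::finite \<Rightarrow> real^'n" and \<beta> :: "'v \<Rightarrow> real"
  assumes "transpose B = B" and "sum \<beta> UNIV = 1"
  shows "(\<Sum>u\<in>UNIV. \<Sum>v\<in>UNIV. \<beta> u * \<beta> v * qf B (p u - p v))
     = 2 * (\<Sum>u\<in>UNIV. \<beta> u * qf B (p u)) - 2 * qf B (\<Sum>u\<in>UNIV. \<beta> u *\<^sub>R p u)"
proof -
  let ?P = "\<Sum>u\<in>UNIV. \<beta> u *\<^sub>R p u"
  have pt: "\<And>u v. \<beta> u * \<beta> v * qf B (p u - p v) = \<beta> u * \<beta> v * qf B (p u) + \<beta> u * \<beta> v * qf B (p v) - 2 * (\<beta> u * \<beta> v * (p u \<bullet> (B *v p v)))"
    by (simp add: qf_diff[OF assms(1)] algebra_simps)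
  have e1: "(\<Sum>u\<in>UNIV. \<Sum>v\<in>UNIV. \<beta> u * \<beta> v * qf B (p u - p v))
    = (\<Sum>u\<in>UNIV. \<Sum>v\<in>UNIV. \<beta> u * \<beta> v * qf B (p u)) + (\<Sum>u\<in>UNIV. \<Sum>v\<in>UNIV. \<beta> u * \<beta> v * qf B (p v))
      - 2 * (\<Sum>u\<in>UNIV. \<Sum>v\<in>UNIV. \<beta> u * \<beta> v * (p u \<bullet> (B *v p v)))"
    unfolding pt by (simp only: sum.distrib sum_subtractf sum_distrib_left[symmetric])
  have e2: "(\<Sum>u\<in>UNIV. \<Sum>v\<in>UNIV. \<beta> u * \<beta> v * qf B (p u)) = (\<Sum>u\<in>UNIV. \<beta> u * qf B (p u))"
  proof -
    have "\<And>u. (\<Sum>v\<in>UNIV. \<beta> u * \<beta> v * qf B (p u)) = (\<beta> u * qf B (p u)) * sum \<beta> UNIV"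
      by (subst sum_distrib_left) (simp add: mult_ac)
    then show ?thesis using assms(2) by simp
  qed
  have e3: "(\<Sum>u\<in>UNIV. \<Sum>v\<in>UNIV. \<beta> u * \<beta> v * qf B (p v)) = (\<Sum>u\<in>UNIV. \<beta> u * qf B (p u))"
  proof -
    have "\<And>u. (\<Sum>v\<in>UNIV. \<beta> u * \<beta> v * qf B (p v)) = \<beta> u * (\<Sum>v\<in>UNIV. \<beta> v * qf B (p v))"
      by (subst sum_distrib_left) (simp add: mult_ac)
    then have "(\<Sum>u\<in>UNIV. \<Sum>v\<in>UNIV. \<beta> u * \<beta> v * qf B (p v)) = sum \<beta> UNIV * (\<Sum>v\<in>UNIV. \<beta> v * qf B (p v))"
      by (simp add: sum_distrib_right)
    then show ?thesis using assms(2) by simp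
  qed
  have e4: "(\<Sum>u\<in>UNIV. \<Sum>v\<in>UNIV. \<beta> u * \<beta> v * (p u \<bullet> (B *v p v))) = qf B ?P"
  proof -
    have "qf B ?P = (\<Sum>u\<in>UNIV. \<beta> u *\<^sub>R p u) \<bullet> (\<Sum>v\<in>UNIV. \<beta> v *\<^sub>R (B *v p v))"
      unfolding qf_def mv_sum mv_scale ..
    also have "\<dots> = (\<Sum>u\<in>UNIV. \<Sum>v\<in>UNIV. (\<beta> u *\<^sub>R p u) \<bullet> (\<beta> v *\<^sub>R (B *v p v)))"
      unfolding inner_sum_left inner_sum_right by (rule sum.swap)
    also have "\<dots> = (\<Sum>u\<in>UNIV. \<Sum>v\<in>UNIV. \<beta> u * \<beta> v * (p u \<bullet> (B *v p v)))"
      by (simp only: inner_scaleR_left inner_scaleR_right mult_ac)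
    finally show ?thesis by simp
  qed
  show ?thesis using e1 e2 e3 e4 by simp
qed


lemma det_Ints:
  fixes M :: "real^'n^'n"
  assumes "\<And>i j. M$i$j \<in> \<int>"
  shows "det M \<in> \<int>"
  unfolding det_def using assms
  by (intro Ints_sum Ints_mult Ints_prod) auto

lemma comb_lemma:
  fixes w :: "'v::finite \<Rightarrow> 'a::real_vector" and sg :: "'n::finite \<Rightarrow> 'v"
  shows "(\<Sum>v\<in>UNIV. of_int ((if v = u then n' else 0) - (\<Sum>k\<in>UNIV. if v = sg k then c' k else 0)
              - (if v = s0 then n' - sum c' UNIV else 0)) *\<^sub>R w v)
       = of_int n' *\<^sub>R w u - (\<Sum>k\<in>UNIV. of_int (c' k) *\<^sub>R w (sg k)) - of_int (n' - sum c' UNIV) *\<^sub>R w s0"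
proof -
  have pt: "\<And>v. of_int ((if v = u then n' else 0) - (\<Sum>k\<in>UNIV. if v = sg k then c' k else 0)
              - (if v = s0 then n' - sum c' UNIV else 0)) *\<^sub>R w v
     = (if v = u then of_int n' *\<^sub>R w u else 0) - (\<Sum>k\<in>UNIV. if v = sg k then of_int (c' k) *\<^sub>R w (sg k) else 0)
        - (if v = s0 then of_int (n' - sum c' UNIV) *\<^sub>R w s0 else 0)"
  proof -
    fix v
    have "of_int (\<Sum>k\<in>UNIV. if v = sg k then c' k else 0) *\<^sub>R w v = (\<Sum>k\<in>UNIV. if v = sg k then of_int (c' k) *\<^sub>R w (sg k) else 0)"
      unfolding of_int_sum scaleR_sum_left by (rule sum.cong) auto
    then show "?thesis v" by (simp add: scaleR_diff_left)
  qed
  have "(\<Sum>v\<in>UNIV. \<Sum>k\<in>UNIV. if v = sg k then of_int (c' k) *\<^sub>R w (sg k) else 0) = (\<Sum>k\<in>UNIV. of_int (c' k) *\<^sub>R w (sg k))"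
    by (subst sum.swap) simp
  then show ?thesis unfolding pt sum_subtractf by simp
qed

locale dl =
  fixes b :: "'n::finite \<Rightarrow> real^'n" and vert :: "'v::finite \<Rightarrow> real^'n" and v0 :: 'v
    and z :: "'v \<Rightarrow> 'n \<Rightarrow> int"
    and c :: "real^'n" and r :: real and s0 :: 'v and sg :: "'n \<Rightarrow> 'v" and L0 :: "real^'n^'n"
  assumes ell_inj: "inj (\<lambda>x::real^'n. \<Sum>i\<in>UNIV. x$i *\<^sub>R b i)"
   and coords: "\<forall>v. vert v - vert v0 = (\<Sum>i\<in>UNIV. of_int (z v i) *\<^sub>R b i)"
   and empty: "\<forall>a\<in>lattice_of_basis b. r\<^sup>2 \<le> (norm (a - c))\<^sup>2"
   and Vdef: "range vert = {a\<in>lattice_of_basis b. (norm (a - c))\<^sup>2 = r\<^sup>2}"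
   and L0l: "L0 ** (\<chi> i k. of_int (z (sg k) i) - of_int (z s0 i)) = mat 1"
   and L0r: "(\<chi> i k. of_int (z (sg k) i) - of_int (z s0 i)) ** L0 = mat 1"
begin

definition "ell x = (\<Sum>i\<in>UNIV. x$i *\<^sub>R b i)"
definition "Zv v = (\<chi> i. real_of_int (z v i))"
definition "Amat = (\<chi> i k. Zv (sg k) $ i - Zv s0 $ i)"
definition "lam u = L0 *v (Zv u - Zv s0)"
definition "Yset = {y::'v\<Rightarrow>int. (\<Sum>v\<in>UNIV. of_int (y v) *\<^sub>R vert v) = 0 \<and> sum y UNIV = 0}"

lemma Amat_eq: "Amat = (\<chi> i k. of_int (z (sg k) i) - of_int (z s0 i))"
  by (simp add: Amat_def Zv_def)

lemma linear_ell: "linear ell"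
  by (rule linearI) (simp_all add: ell_def scaleR_add_left sum.distrib scaleR_sum_right)

lemma inj_ell: "inj ell"
  using ell_inj unfolding ell_def[abs_def] .

lemma vert_eq: "vert v = vert v0 + ell (Zv v)"
proof -
  have "vert v - vert v0 = ell (Zv v)" using coords by (simp add: ell_def Zv_def)
  then show ?thesis by (simp add: algebra_simps)
qed

lemma Amat_L0: "Amat ** L0 = mat 1" "L0 ** Amat = mat 1"
  using L0l L0r by (simp_all add: Amat_eq)

lemma det_nz: "det Amat \<noteq> 0"
  using Amat_L0 invertible_det_nz invertible_def by blast

lemma Amat_lam: "Amat *v lam u = Zv u - Zv s0"
  by (simp add: lam_def matrix_vector_mul_assoc Amat_L0)

lemma column_Amat: "column k Amat = Zv (sg k) - Zv s0"
  by (simp add: column_def Amat_def vec_eq_iff)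

lemma lam_Ints: "det Amat * lam u $ k \<in> \<int>"
proof -
  have "det (\<chi> i j. if j = k then (Amat *v lam u)$i else Amat$i$j) = lam u $ k * det Amat"
    by (rule cramer_lemma)
  moreover have "det (\<chi> i j. if j = k then (Amat *v lam u)$i else Amat$i$j) \<in> \<int>"
    unfolding Amat_lam by (rule det_Ints) (simp add: Amat_def Zv_def)
  ultimately show ?thesis by (simp add: mult.commute)
qed


end


context dl begin
lemma AFF:
  assumes orth: "\<forall>y\<in>Yset. (\<Sum>v\<in>UNIV. of_int (y v) * g v) = 0"
  shows "g u = g s0 + (\<Sum>k\<in>UNIV. lam u $ k * (g (sg k) - g s0))"
proof -
  let ?N = "det Amat"
  have "?N \<in> \<int>" by (rule det_Ints) (simp add: Amat_def Zv_def)
  then obtain n' where n': "?N = of_int n'" by (auto elim: Ints_cases)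
  have "\<forall>k. \<exists>m. ?N * lam u $ k = of_int m" using lam_Ints by (metis Ints_cases)
  then obtain c' where c': "\<And>k. ?N * lam u $ k = of_int (c' k)" by metis
  define y where "y v = (if v = u then n' else 0) - (\<Sum>k\<in>UNIV. if v = sg k then c' k else 0)
              - (if v = s0 then n' - sum c' UNIV else 0)" for v
  have ysum: "sum y UNIV = 0"
  proof -
    have "(\<Sum>v\<in>UNIV. \<Sum>k\<in>UNIV. if v = sg k then c' k else 0) = sum c' UNIV"
      by (subst sum.swap) simp
    then show ?thesis unfolding y_def sum_subtractf by simp
  qed
  have cmb: "(\<Sum>v\<in>UNIV. of_int (y v) *\<^sub>R w v) = of_int n' *\<^sub>R w u - (\<Sum>k\<in>UNIV. of_int (c' k) *\<^sub>R w (sg k)) - of_int (n' - sum c' UNIV) *\<^sub>R w s0"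
    for w :: "'v \<Rightarrow> 'a::real_vector"
    unfolding y_def by (rule comb_lemma)
  have "(\<Sum>v\<in>UNIV. of_int (y v) *\<^sub>R vert v) = 0"
  proof -
    have "(\<Sum>v\<in>UNIV. of_int (y v) *\<^sub>R vert v) = (\<Sum>v\<in>UNIV. of_int (y v) *\<^sub>R (vert v0 + ell (Zv v - Zv s0) + ell (Zv s0)))"
    proof (rule sum.cong[OF refl])
      fix v
      have "vert v = vert v0 + ell (Zv v - Zv s0) + ell (Zv s0)"
        using vert_eq[of v] linear_diff[OF linear_ell, of "Zv v" "Zv s0"] by simp
      then show "of_int (y v) *\<^sub>R vert v = of_int (y v) *\<^sub>R (vert v0 + ell (Zv v - Zv s0) + ell (Zv s0))" by simp
    qed
    also have "\<dots> = (\<Sum>v\<in>UNIV. of_int (y v) *\<^sub>R ell (Zv v - Zv s0)) + (\<Sum>v\<in>UNIV. of_int (y v) *\<^sub>R (vert v0 + ell (Zv s0)))"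
      by (simp only: scaleR_add_right sum.distrib add.commute add.left_commute)
    also have "(\<Sum>v\<in>UNIV. of_int (y v) *\<^sub>R (vert v0 + ell (Zv s0))) = of_int (sum y UNIV) *\<^sub>R (vert v0 + ell (Zv s0))"
      by (simp only: scaleR_sum_left[symmetric] of_int_sum[symmetric])
    also have "(\<Sum>v\<in>UNIV. of_int (y v) *\<^sub>R ell (Zv v - Zv s0)) + of_int (sum y UNIV) *\<^sub>R (vert v0 + ell (Zv s0)) = ell (\<Sum>v\<in>UNIV. of_int (y v) *\<^sub>R (Zv v - Zv s0))"
    proof -
      have "ell (\<Sum>v\<in>UNIV. of_int (y v) *\<^sub>R (Zv v - Zv s0)) = (\<Sum>v\<in>UNIV. of_int (y v) *\<^sub>R ell (Zv v - Zv s0))"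
        by (simp only: linear_sum[OF linear_ell] linear_scale[OF linear_ell])
      then show ?thesis using ysum by simp
    qed
    also have "(\<Sum>v\<in>UNIV. of_int (y v) *\<^sub>R (Zv v - Zv s0)) = 0"
    proof -
      have "(\<Sum>k\<in>UNIV. of_int (c' k) *\<^sub>R (Zv (sg k) - Zv s0)) = Amat *v (?N *\<^sub>R lam u)"
        unfolding matrix_mult_sum column_Amat by (simp add: c' scalar_mult_eq_scaleR)
      also have "\<dots> = ?N *\<^sub>R (Zv u - Zv s0)" by (simp add: mv_scale Amat_lam)
      finally show ?thesis unfolding cmb by (simp add: n')
    qed
    finally show ?thesis using linear_ell by (simp add: linear_0)
  qed
  with ysum have "y \<in> Yset" by (simp add: Yset_def)
  with orth have "(\<Sum>v\<in>UNIV. of_int (y v) * g v) = 0" by blast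
  then have "of_int n' * g u - (\<Sum>k\<in>UNIV. of_int (c' k) * g (sg k)) - of_int (n' - sum c' UNIV) * g s0 = 0"
    using cmb[of g] by simp
  then have "?N * (g u - g s0) = (\<Sum>k\<in>UNIV. of_int (c' k) * (g (sg k) - g s0))"
    by (simp add: n' algebra_simps sum_subtractf sum_distrib_left of_int_sum)
  also have "\<dots> = ?N * (\<Sum>k\<in>UNIV. lam u $ k * (g (sg k) - g s0))"
    by (simp add: c'[symmetric] sum_distrib_left mult.assoc)
  finally show ?thesis using det_nz by simp
qed

end


definition bil :: "real^'n^'n \<Rightarrow> real^'n \<Rightarrow> real^'n \<Rightarrow> real" where
  "bil M x y = (\<Sum>k\<in>UNIV. \<Sum>l\<in>UNIV. x$k * M$k$l * y$l)"

lemma qf_bil: "qf M x = bil M x x"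
  by (simp add: qf_def bil_def inner_vec_def matrix_vector_mult_def sum_distrib_left mult_ac)

lemma bil_diff_left: "bil M (x - y) w = bil M x w - bil M y w"
  by (simp add: bil_def algebra_simps sum_subtractf)

lemma bil_diff_right: "bil M w (x - y) = bil M w x - bil M w y"
  by (simp add: bil_def algebra_simps sum_subtractf)

lemma bil_sym: "transpose M = M \<Longrightarrow> bil M x y = bil M y x"
  unfolding bil_def
proof -
  assume a: "transpose M = M"
  have m: "M$k$l = M$l$k" for k l by (metis a transpose_def vec_lambda_beta)
  show "(\<Sum>k\<in>UNIV. \<Sum>l\<in>UNIV. x$k * M$k$l * y$l) = (\<Sum>k\<in>UNIV. \<Sum>l\<in>UNIV. y$k * M$k$l * x$l)"
    by (subst sum.swap) (simp add: m mult_ac)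
qed

lemma bil_Bp:
  "bil (\<chi> k l. (a$k + a$l - D$k$l) / 2) x x = (a \<bullet> x) * (\<Sum>k\<in>UNIV. x$k) - bil D x x / 2"
proof -
  have "bil (\<chi> k l. (a$k + a$l - D$k$l) / 2) x x
     = (\<Sum>k\<in>UNIV. \<Sum>l\<in>UNIV. (x$k * a$k * x$l + x$k * a$l * x$l - x$k * D$k$l * x$l) / 2)"
    by (simp add: bil_def algebra_simps add_divide_distrib diff_divide_distrib)
  also have "\<dots> = ((\<Sum>k\<in>UNIV. \<Sum>l\<in>UNIV. x$k * a$k * x$l) + (\<Sum>k\<in>UNIV. \<Sum>l\<in>UNIV. x$k * a$l * x$l) - bil D x x) / 2"
    by (simp add: bil_def sum_divide_distrib[symmetric] sum.distrib sum_subtractf)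
  also have "(\<Sum>k\<in>UNIV. \<Sum>l\<in>UNIV. x$k * a$k * x$l) = (a \<bullet> x) * (\<Sum>k\<in>UNIV. x$k)"
    by (simp add: inner_vec_def sum_distrib_left sum_distrib_right mult_ac)
  also have "(\<Sum>k\<in>UNIV. \<Sum>l\<in>UNIV. x$k * a$l * x$l) = (\<Sum>k\<in>UNIV. x$k) * (\<Sum>l\<in>UNIV. a$l * x$l)"
    by (simp add: sum_product mult_ac)
  also have "\<dots> = (a \<bullet> x) * (\<Sum>k\<in>UNIV. x$k)"
    by (simp add: inner_vec_def mult.commute)
  finally show ?thesis by simp
qed

lemma inner_transpose_mv: "x \<bullet> (transpose M *v w) = (M *v x) \<bullet> (w::real^'n)"
proof -
  have "x \<bullet> (transpose M *v w) = (\<Sum>i\<in>UNIV. \<Sum>j\<in>UNIV. x$i * M$j$i * w$j)"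
    by (simp add: inner_vec_def matrix_vector_mult_def transpose_def sum_distrib_left mult_ac)
  also have "\<dots> = (\<Sum>j\<in>UNIV. \<Sum>i\<in>UNIV. x$i * M$j$i * w$j)" by (rule sum.swap)
  also have "\<dots> = (M *v x) \<bullet> w"
    by (simp add: inner_vec_def matrix_vector_mult_def sum_distrib_right sum_distrib_left mult_ac)
  finally show ?thesis .
qed

lemma qf_conj: "qf (transpose M ** B ** M) x = qf B (M *v x)"
proof -
  have "(transpose M ** B ** M) *v x = transpose M *v (B *v (M *v x))" by (metis matrix_vector_mul_assoc)
  then show ?thesis unfolding qf_def by (metis inner_transpose_mv)
qed

lemma tAB_entry: "(transpose A ** B ** A)$k$l = column k A \<bullet> (B *v column l A)"
proof -
  have "column k A \<bullet> (B *v column l A) = (\<Sum>i\<in>UNIV. \<Sum>j\<in>UNIV. A$i$k * B$i$j * A$j$l)"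
    by (simp add: inner_vec_def matrix_vector_mult_def column_def sum_distrib_left mult_ac)
  also have "\<dots> = (\<Sum>j\<in>UNIV. \<Sum>i\<in>UNIV. A$i$k * B$i$j * A$j$l)" by (rule sum.swap)
  also have "\<dots> = (transpose A ** B ** A)$k$l"
    by (simp add: matrix_matrix_mult_def transpose_def sum_distrib_right sum_distrib_left mult_ac)
  finally show ?thesis by simp
qed

lemma transpose_conj: "transpose (B::real^'n^'n) = B \<Longrightarrow> transpose (transpose M ** B ** M) = transpose M ** B ** M"
  by (simp add: matrix_transpose_mul matrix_mul_assoc)

context dl begin

definition "Phi B = (\<chi> u v. qf B (Zv u - Zv v))"
definition "Bp d = (\<chi> k l. (d$(sg k)$s0 + d$s0$(sg l) - d$(sg k)$(sg l)) / 2)"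
definition "Psi d = transpose L0 ** Bp d ** L0"
definition "Bset = {B :: real^'n^'n. transpose B = B \<and>
            (\<forall>y::'v \<Rightarrow> int. (\<Sum>v\<in>UNIV. of_int (y v) *\<^sub>R vert v) = 0 \<and> sum y UNIV = 0 \<longrightarrow>
               (\<Sum>i\<in>UNIV. \<Sum>j\<in>UNIV. (\<Sum>v\<in>UNIV. of_int (y v * z v i * z v j)) * B$i$j) = 0)}"

lemma bset_cond:
  "(\<Sum>i\<in>UNIV. \<Sum>j\<in>UNIV. (\<Sum>v\<in>UNIV. of_int (y v * z v i * z v j)) * B$i$j) = (\<Sum>v\<in>UNIV. of_int (y v) * qf B (Zv v))"
proof -
  have "(\<Sum>v\<in>UNIV. of_int (y v) * qf B (Zv v)) = (\<Sum>v\<in>UNIV. \<Sum>i\<in>UNIV. \<Sum>j\<in>UNIV. of_int (y v * z v i * z v j) * B$i$j)"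
    by (simp add: qf_def inner_vec_def matrix_vector_mult_def Zv_def sum_distrib_left mult_ac)
  also have "\<dots> = (\<Sum>i\<in>UNIV. \<Sum>v\<in>UNIV. \<Sum>j\<in>UNIV. of_int (y v * z v i * z v j) * B$i$j)"
    by (rule sum.swap)
  also have "\<dots> = (\<Sum>i\<in>UNIV. \<Sum>j\<in>UNIV. \<Sum>v\<in>UNIV. of_int (y v * z v i * z v j) * B$i$j)"
    by (rule sum.cong[OF refl], rule sum.swap)
  also have "\<dots> = (\<Sum>i\<in>UNIV. \<Sum>j\<in>UNIV. (\<Sum>v\<in>UNIV. of_int (y v * z v i * z v j)) * B$i$j)"
    by (simp add: sum_distrib_right)
  finally show ?thesis by simp
qed

lemma Bset_alt: "Bset = {B. transpose B = B \<and> (\<forall>y\<in>Yset. (\<Sum>v\<in>UNIV. of_int (y v) * qf B (Zv v)) = 0)}"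
  unfolding Bset_def Yset_def bset_cond by auto

lemma Y_Zv:
  assumes "y \<in> Yset"
  shows "(\<Sum>v\<in>UNIV. of_int (y v) *\<^sub>R Zv v) = 0"
proof -
  have "(\<Sum>v\<in>UNIV. of_int (y v) *\<^sub>R vert v) = (\<Sum>v\<in>UNIV. of_int (y v) *\<^sub>R vert v0 + of_int (y v) *\<^sub>R ell (Zv v))"
    by (rule sum.cong[OF refl]) (metis vert_eq scaleR_add_right)
  also have "\<dots> = of_int (sum y UNIV) *\<^sub>R vert v0 + ell (\<Sum>v\<in>UNIV. of_int (y v) *\<^sub>R Zv v)"
    by (simp only: sum.distrib scaleR_sum_left[symmetric] of_int_sum[symmetric] linear_sum[OF linear_ell] linear_scale[OF linear_ell])
  moreover have "sum y UNIV = 0" "(\<Sum>v\<in>UNIV. of_int (y v) *\<^sub>R vert v) = 0" using assms by (simp_all add: Yset_def)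
  moreover have "of_int (sum y UNIV) = (0::real)" using calculation by simp
  ultimately have "ell (\<Sum>v\<in>UNIV. of_int (y v) *\<^sub>R Zv v) = 0" by simp
  then show ?thesis using inj_ell linear_ell by (simp add: linear_injective_0)
qed

lemma qf_neg: "qf B (- x) = qf B x"
proof -
  have "B *v (-x) = -(B *v x)" using matrix_vector_mult_diff_distrib[of B 0 x] by simp
  then show ?thesis by (simp add: qf_def)
qed

lemma Psi_Phi:
  assumes "transpose B = B"
  shows "Psi (Phi B) = B"
proof -
  have "Bp (Phi B) = transpose Amat ** B ** Amat"
  proof -
    have "Bp (Phi B) $ k $ l = (transpose Amat ** B ** Amat) $ k $ l" for k l
    proof -
      have h1: "Phi B $ sg k $ s0 = qf B (column k Amat)" by (simp add: Phi_def column_Amat)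
      have "Zv s0 - Zv (sg l) = - column l Amat" by (simp add: column_Amat)
      then have h2: "Phi B $ s0 $ sg l = qf B (column l Amat)" by (simp add: Phi_def qf_neg)
      have h3: "Phi B $ sg k $ sg l = qf B (column k Amat - column l Amat)" by (simp add: Phi_def column_Amat)
      show ?thesis unfolding tAB_entry Bp_def
        by (simp add: h1 h2 h3 qf_diff[OF assms])
    qed
    then show ?thesis by (simp add: vec_eq_iff)
  qed
  then have "Psi (Phi B) = transpose (Amat ** L0) ** B ** (Amat ** L0)"
    by (simp add: Psi_def matrix_transpose_mul matrix_mul_assoc)
  then show ?thesis by (simp add: Amat_L0 transpose_mat)
qed

lemma inj_Phi: "inj_on Phi Bset"
  by (rule inj_on_inverseI[where g = Psi]) (simp add: Bset_def Psi_Phi)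

end


lemma final_alg:
  fixes F A1 A2 S1 S2 Dpp Dpq Dqq :: real
  assumes "F = A1 + A2 + Dpq - S1*A2 - S2*A1" "0 = 2*A1 + Dpp - 2*S1*A1" "0 = 2*A2 + Dqq - 2*S2*A2"
  shows "F = (A1 - A2)*(S1 - S2) - (Dpp - 2*Dpq + Dqq)/2"
proof -
  have e: "Dpp = 2*S1*A1 - 2*A1" "Dqq = 2*S2*A2 - 2*A2" using assms by linarith+
  have "(A1 - A2)*(S1 - S2) - (Dpp - 2*Dpq + Dqq)/2 = (A1 - A2)*(S1 - S2) - ((2*S1*A1 - 2*A1) - 2*Dpq + (2*S2*A2 - 2*A2))/2"
    unfolding e ..
  also have "\<dots> = A1 + A2 + Dpq - S1*A2 - S2*A1" by (simp add: field_simps)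
  finally show ?thesis using assms(1) by simp
qed

context dl begin

lemma orth_sym:
  assumes sym: "\<forall>u v. d$u$v = d$v$u"
    and orth: "\<forall>x. \<forall>y\<in>Yset. (\<Sum>u\<in>UNIV. of_int (y u) * d$x$u) = 0"
  shows "\<forall>y\<in>Yset. (\<Sum>u\<in>UNIV. of_int (y u) * d$u$x) = 0"
proof
  fix y assume "y \<in> Yset"
  then have "(\<Sum>u\<in>UNIV. of_int (y u) * d$x$u) = 0" using orth by blast
  moreover have "(\<Sum>u\<in>UNIV. of_int (y u) * d$u$x) = (\<Sum>u\<in>UNIV. of_int (y u) * d$x$u)"
    by (rule sum.cong[OF refl]) (metis sym)
  ultimately show "(\<Sum>u\<in>UNIV. of_int (y u) * d$u$x) = 0" by simp
qed

lemma Phi_Psi: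
  assumes sym: "\<forall>u v. d$u$v = d$v$u" and diag: "\<forall>v. d$v$v = 0"
    and orth: "\<forall>x. \<forall>y\<in>Yset. (\<Sum>u\<in>UNIV. of_int (y u) * d$x$u) = 0"
  shows "Phi (Psi d) = d"
proof -
  define a where "a = (\<chi> k. d$(sg k)$s0)"
  define D where "D = (\<chi> k l. d$(sg k)$(sg l))"
  have symD: "transpose D = D" using sym by (simp add: D_def transpose_def vec_eq_iff)
  have Bp_eq: "Bp d = (\<chi> k l. (a$k + a$l - D$k$l) / 2)"
    using sym by (simp add: Bp_def a_def D_def vec_eq_iff)
  have orth2: "\<forall>y\<in>Yset. (\<Sum>u\<in>UNIV. of_int (y u) * d$u$x) = 0" for x
    using orth_sym[OF sym orth] .
  have F: "d$w$u = a \<bullet> lam w + a \<bullet> lam u + bil D (lam w) (lam u)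
      - (\<Sum>k\<in>UNIV. lam w $ k) * (a \<bullet> lam u) - (\<Sum>k\<in>UNIV. lam u $ k) * (a \<bullet> lam w)" for w u
  proof -
    let ?p = "lam w" and ?q = "lam u"
    have A1: "d$w$u = d$w$s0 + (\<Sum>k\<in>UNIV. ?q $ k * (d$w$(sg k) - d$w$s0))"
      using AFF[of "\<lambda>u. d$w$u" u] orth by blast
    have A2: "d$w$s0 = a \<bullet> ?p"
    proof -
      have "d$w$s0 = d$s0$s0 + (\<Sum>k\<in>UNIV. ?p $ k * (d$(sg k)$s0 - d$s0$s0))"
        using AFF[of "\<lambda>w. d$w$s0" w] orth2 by blast
      then show ?thesis using diag by (simp add: a_def inner_vec_def mult.commute)
    qed
    have A3: "d$w$(sg k) = a$k + (\<Sum>l\<in>UNIV. ?p $ l * D$l$k) - (\<Sum>l\<in>UNIV. ?p $ l) * a$k" for k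
    proof -
      have "d$w$(sg k) = d$s0$(sg k) + (\<Sum>l\<in>UNIV. ?p $ l * (d$(sg l)$(sg k) - d$s0$(sg k)))"
        using AFF[of "\<lambda>w. d$w$(sg k)" w] orth2 by blast
      moreover have "d$s0$(sg k) = a$k" using sym by (simp add: a_def)
      ultimately show ?thesis by (simp add: D_def algebra_simps sum_subtractf sum_distrib_right sum_distrib_left)
    qed
    have "d$w$u = a \<bullet> ?p + (\<Sum>k\<in>UNIV. ?q $ k * (a$k + (\<Sum>l\<in>UNIV. ?p $ l * D$l$k) - (\<Sum>l\<in>UNIV. ?p $ l) * a$k - a \<bullet> ?p))"
      using A1 A2 A3 by simp
    also have "\<dots> = a \<bullet> ?p + (\<Sum>k\<in>UNIV. ?q $ k * a$k) + (\<Sum>k\<in>UNIV. ?q $ k * (\<Sum>l\<in>UNIV. ?p $ l * D$l$k))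
        - (\<Sum>l\<in>UNIV. ?p $ l) * (\<Sum>k\<in>UNIV. ?q $ k * a$k) - (\<Sum>k\<in>UNIV. ?q $ k) * (a \<bullet> ?p)"
      by (simp add: algebra_simps sum.distrib sum_subtractf sum_distrib_left sum_distrib_right)
    also have "(\<Sum>k\<in>UNIV. ?q $ k * (\<Sum>l\<in>UNIV. ?p $ l * D$l$k)) = bil D ?p ?q"
    proof -
      have "(\<Sum>k\<in>UNIV. ?q $ k * (\<Sum>l\<in>UNIV. ?p $ l * D$l$k)) = (\<Sum>k\<in>UNIV. \<Sum>l\<in>UNIV. ?p $ l * D$l$k * ?q $ k)"
        by (simp add: sum_distrib_left mult_ac)
      also have "\<dots> = bil D ?p ?q" unfolding bil_def by (rule sum.swap)
      finally show ?thesis .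
    qed
    also have "(\<Sum>k\<in>UNIV. ?q $ k * a$k) = a \<bullet> ?q" by (simp add: inner_vec_def mult.commute)
    finally show ?thesis by simp
  qed
  have "Phi (Psi d) $ w $ u = d $ w $ u" for w u
  proof -
    let ?p = "lam w" and ?q = "lam u"
    have "Phi (Psi d) $ w $ u = qf (Bp d) (?p - ?q)"
      by (simp add: Phi_def Psi_def qf_conj lam_def matrix_vector_mult_diff_distrib)
    also have "\<dots> = (a \<bullet> (?p - ?q)) * (\<Sum>k\<in>UNIV. (?p - ?q)$k) - bil D (?p - ?q) (?p - ?q) / 2"
      unfolding Bp_eq qf_bil by (rule bil_Bp)
    also have "\<dots> = (a \<bullet> ?p - a \<bullet> ?q) * ((\<Sum>k\<in>UNIV. ?p$k) - (\<Sum>k\<in>UNIV. ?q$k))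
         - (bil D ?p ?p - 2 * bil D ?p ?q + bil D ?q ?q) / 2"
      using bil_sym[OF symD, of ?q ?p]
      by (simp add: inner_diff_right sum_subtractf bil_diff_left bil_diff_right)
    also have "\<dots> = d$w$u"
      using F[of w u] F[of w w] F[of u u] diag
      by (intro final_alg[symmetric]) auto
    finally show ?thesis .
  qed
  then show ?thesis by (simp add: vec_eq_iff)
qed

lemma Psi_Bset:
  assumes sym: "\<forall>u v. d$u$v = d$v$u" and diag: "\<forall>v. d$v$v = 0"
    and orth: "\<forall>x. \<forall>y\<in>Yset. (\<Sum>u\<in>UNIV. of_int (y u) * d$x$u) = 0"
  shows "Psi d \<in> Bset"
proof -
  have tBp: "transpose (Bp d) = Bp d" using sym by (simp add: Bp_def transpose_def vec_eq_iff add.commute)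
  then have tP: "transpose (Psi d) = Psi d" unfolding Psi_def by (rule transpose_conj)
  have PP: "Phi (Psi d) = d" by (rule Phi_Psi[OF assms])
  have "(\<Sum>v\<in>UNIV. of_int (y v) * qf (Psi d) (Zv v)) = 0" if y: "y \<in> Yset" for y
  proof -
    let ?P = "Psi d"
    define K where "K = qf ?P (Zv s0)"
    define W where "W = ?P *v Zv s0"
    have q: "qf ?P (Zv v) = d$v$s0 - K + 2 * (Zv v \<bullet> W)" for v
    proof -
      have "Phi ?P $ v $ s0 = d$v$s0" using PP by simp
      then have "qf ?P (Zv v - Zv s0) = d$v$s0" by (simp add: Phi_def)
      then show ?thesis using qf_diff[OF tP, of "Zv v" "Zv s0"] by (simp add: K_def W_def)
    qed
    have "(\<Sum>v\<in>UNIV. of_int (y v) * qf ?P (Zv v))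
       = (\<Sum>v\<in>UNIV. of_int (y v) * d$v$s0) - (\<Sum>v\<in>UNIV. of_int (y v)) * K
         + 2 * ((\<Sum>v\<in>UNIV. of_int (y v) *\<^sub>R Zv v) \<bullet> W)"
    proof -
      have pt: "of_int (y v) * (d$v$s0 - K + 2 * (Zv v \<bullet> W)) = of_int (y v) * d$v$s0 - of_int (y v) * K + 2 * (of_int (y v) * (Zv v \<bullet> W))" for v
        by (simp add: algebra_simps)
      have i: "(\<Sum>v\<in>UNIV. of_int (y v) *\<^sub>R Zv v) \<bullet> W = (\<Sum>v\<in>UNIV. of_int (y v) * (Zv v \<bullet> W))"
        by (simp add: inner_sum_left)
      show ?thesis unfolding q pt i
        by (simp only: sum.distrib sum_subtractf sum_distrib_left[symmetric] sum_distrib_right[symmetric])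
    qed
    also have "\<dots> = 0" using orth_sym[OF sym orth] y Y_Zv[OF y] by (simp add: Yset_def flip: of_int_sum)
    finally show ?thesis .
  qed
  then show ?thesis using tP by (simp add: Bset_alt)
qed

end


definition hfr :: "('v::finite \<Rightarrow> real) \<Rightarrow> real^'v^'v \<Rightarrow> real" where
  "hfr \<beta> d = (\<Sum>u\<in>UNIV. \<Sum>v\<in>UNIV. \<beta> u * \<beta> v * d$u$v)"

lemma hf_hfr: "hf \<beta> d = hfr (\<lambda>u. of_int (\<beta> u)) d"
  by (simp add: hf_def hfr_def)

lemma hfr_add: "hfr \<beta> (d1 + d2) = hfr \<beta> d1 + hfr \<beta> d2"
  by (simp add: hfr_def algebra_simps sum.distrib)

lemma hfr_scale: "hfr \<beta> (e *\<^sub>R d) = e * hfr \<beta> d"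
  by (simp add: hfr_def sum_distrib_left mult_ac)

lemma delta_sum: "(\<Sum>v\<in>UNIV. (if v = (w::'v::finite) then (1::real) else 0) * f v) = f w"
proof -
  have "(\<Sum>v\<in>UNIV. (if v = w then (1::real) else 0) * f v) = (\<Sum>v\<in>UNIV. if v = w then f v else 0)"
    by (rule sum.cong) auto
  then show ?thesis by simp
qed

lemma hfr_delta:
  fixes y :: "'v::finite \<Rightarrow> real"
  shows "hfr (\<lambda>u. (if u = w then 1 else 0) + t * y u) d
     = d$w$w + t * (\<Sum>v\<in>UNIV. y v * d$w$v) + t * (\<Sum>u\<in>UNIV. y u * d$u$w) + t^2 * hfr y d"
proof -
  let ?e = "\<lambda>u. if u = w then 1 else (0::real)"
  have pt: "(?e u + t * y u) * (?e v + t * y v) * d$u$v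
     = ?e u * (?e v * d$u$v) + t * (?e u * (y v * d$u$v)) + t * (?e v * (y u * d$u$v)) + t^2 * (y u * y v * d$u$v)" for u v
    by (simp add: algebra_simps power2_eq_square)
  have s1: "(\<Sum>u\<in>UNIV. \<Sum>v\<in>UNIV. ?e u * (?e v * d$u$v)) = d$w$w"
  proof -
    have "(\<Sum>u\<in>UNIV. \<Sum>v\<in>UNIV. ?e u * (?e v * d$u$v)) = (\<Sum>u\<in>UNIV. ?e u * (\<Sum>v\<in>UNIV. ?e v * d$u$v))"
      by (simp only: sum_distrib_left)
    also have "\<dots> = (\<Sum>u\<in>UNIV. ?e u * d$u$w)" by (simp only: delta_sum)
    also have "\<dots> = d$w$w" by (rule delta_sum)
    finally show ?thesis .
  qed
  have s2: "(\<Sum>u\<in>UNIV. \<Sum>v\<in>UNIV. ?e u * (y v * d$u$v)) = (\<Sum>v\<in>UNIV. y v * d$w$v)"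
  proof -
    have "(\<Sum>u\<in>UNIV. \<Sum>v\<in>UNIV. ?e u * (y v * d$u$v)) = (\<Sum>u\<in>UNIV. ?e u * (\<Sum>v\<in>UNIV. y v * d$u$v))"
      by (simp only: sum_distrib_left)
    also have "\<dots> = (\<Sum>v\<in>UNIV. y v * d$w$v)" by (rule delta_sum)
    finally show ?thesis .
  qed
  have s3: "(\<Sum>u\<in>UNIV. \<Sum>v\<in>UNIV. ?e v * (y u * d$u$v)) = (\<Sum>u\<in>UNIV. y u * d$u$w)"
    by (simp add: if_distrib[of "\<lambda>x. x * _"] cong: if_cong)
  have "hfr (\<lambda>u. ?e u + t * y u) d = (\<Sum>u\<in>UNIV. \<Sum>v\<in>UNIV. ?e u * (?e v * d$u$v))
     + t * (\<Sum>u\<in>UNIV. \<Sum>v\<in>UNIV. ?e u * (y v * d$u$v)) + t * (\<Sum>u\<in>UNIV. \<Sum>v\<in>UNIV. ?e v * (y u * d$u$v))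
     + t^2 * (\<Sum>u\<in>UNIV. \<Sum>v\<in>UNIV. y u * y v * d$u$v)"
    unfolding hfr_def pt by (simp only: sum.distrib sum_distrib_left)
  then show ?thesis unfolding s1 s2 s3 hfr_def by simp
qed

context dl begin

abbreviation "dP \<equiv> delaunay_distance vert"

lemma vert_sphere: "(norm (vert u - c))\<^sup>2 = r\<^sup>2"
  using Vdef by (metis (mono_tags, lifting) mem_Collect_eq rangeI)

lemma vert_lat: "vert u \<in> lattice_of_basis b"
  using Vdef by (metis (mono_tags, lifting) mem_Collect_eq rangeI)

lemma qf_mat1: "qf (mat 1) x = (norm x)\<^sup>2"
  by (simp add: qf_def power2_norm_eq_inner)

lemma hf_dP:
  assumes "sum \<beta> UNIV = 1"
  shows "hf \<beta> dP = 2 * r\<^sup>2 - 2 * (norm ((\<Sum>u\<in>UNIV. of_int (\<beta> u) *\<^sub>R vert u) - c))\<^sup>2"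
proof -
  let ?b = "\<lambda>u. real_of_int (\<beta> u)"
  have sb: "sum ?b UNIV = 1" using assms by (simp flip: of_int_sum)
  have "hf \<beta> dP = (\<Sum>u\<in>UNIV. \<Sum>v\<in>UNIV. ?b u * ?b v * qf (mat 1) ((vert u - c) - (vert v - c)))"
    by (simp add: hf_def delaunay_distance_def qf_mat1)
  also have "\<dots> = 2 * (\<Sum>u\<in>UNIV. ?b u * qf (mat 1) (vert u - c)) - 2 * qf (mat 1) (\<Sum>u\<in>UNIV. ?b u *\<^sub>R (vert u - c))"
    by (rule GQ) (simp_all add: sb)
  also have "(\<Sum>u\<in>UNIV. ?b u * qf (mat 1) (vert u - c)) = r\<^sup>2"
    by (simp add: qf_mat1 vert_sphere sb flip: sum_distrib_right)
  also have "(\<Sum>u\<in>UNIV. ?b u *\<^sub>R (vert u - c)) = (\<Sum>u\<in>UNIV. ?b u *\<^sub>R vert u) - c"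
    by (simp add: scaleR_diff_right sum_subtractf sb flip: scaleR_sum_left)
  finally show ?thesis by (simp add: qf_mat1)
qed

lemma hf_Phi:
  assumes "transpose B = B" "sum \<beta> UNIV = 1"
  shows "hf \<beta> (Phi B) = 2 * (\<Sum>u\<in>UNIV. of_int (\<beta> u) * qf B (Zv u)) - 2 * qf B (\<Sum>u\<in>UNIV. of_int (\<beta> u) *\<^sub>R Zv u)"
proof -
  have sb: "(\<Sum>u\<in>UNIV. real_of_int (\<beta> u)) = 1" using assms(2) by (simp flip: of_int_sum)
  show ?thesis unfolding hf_def Phi_def using GQ[OF assms(1) sb, of Zv] by simp
qed

lemma in_hyp: "d \<in> hyp_cone \<longleftrightarrow> (\<forall>u v. d$u$v = d$v$u) \<and> (\<forall>v. d$v$v = 0) \<and>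
   (\<forall>\<beta>::'v \<Rightarrow> int. sum \<beta> UNIV = 1 \<longrightarrow> hf \<beta> d \<le> 0)"
  by (simp add: hyp_cone_def hf_def)

definition "Eface = {d \<in> hyp_cone. \<forall>\<beta>::'v\<Rightarrow>int. sum \<beta> UNIV = 1 \<and> hf \<beta> dP = 0 \<longrightarrow> hf \<beta> d = 0}"

lemma E_orth:
  assumes d: "d \<in> Eface"
  shows "\<forall>x. \<forall>y\<in>Yset. (\<Sum>u\<in>UNIV. of_int (y u) * d$x$u) = 0"
proof (intro allI ballI)
  fix x y assume y: "y \<in> Yset"
  have sym: "\<forall>u v. d$u$v = d$v$u" and diag: "\<forall>v. d$v$v = 0" using d by (simp_all add: Eface_def in_hyp)
  have eq: "hf (\<lambda>u. (if u = x then 1 else 0) + t * y u) d = 0" for t :: int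
  proof -
    let ?\<beta> = "\<lambda>u. (if u = x then 1 else 0) + t * y u"
    have s: "sum ?\<beta> UNIV = 1" using y by (simp add: Yset_def sum.distrib flip: sum_distrib_left)
    have "(\<Sum>u\<in>UNIV. of_int (?\<beta> u) *\<^sub>R vert u) = vert x + of_int t *\<^sub>R (\<Sum>u\<in>UNIV. of_int (y u) *\<^sub>R vert u)"
    proof -
      have "(\<Sum>u\<in>UNIV. real_of_int (if u = x then 1 else 0) *\<^sub>R vert u) = (\<Sum>u\<in>UNIV. if u = x then vert u else 0)"
        by (rule sum.cong) auto
      then show ?thesis by (simp add: scaleR_add_left sum.distrib scaleR_sum_right)
    qed
    also have "\<dots> = vert x" using y by (simp add: Yset_def)
    finally have "hf ?\<beta> dP = 0" using hf_dP[OF s] vert_sphere by simp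
    then show ?thesis using d s by (simp add: Eface_def)
  qed
  let ?S = "\<Sum>u\<in>UNIV. of_int (y u) * d$x$u"
  have sS: "(\<Sum>u\<in>UNIV. of_int (y u) * d$u$x) = ?S"
    by (rule sum.cong[OF refl]) (metis sym)
  have "hf (\<lambda>u. (if u = x then 1 else 0) + t * y u) d = 2 * of_int t * ?S + (of_int t)^2 * hfr (\<lambda>u. of_int (y u)) d" for t :: int
  proof -
    have "hf (\<lambda>u. (if u = x then 1 else 0) + t * y u) d = hfr (\<lambda>u. (if u = x then 1 else 0) + of_int t * of_int (y u)) d"
      unfolding hf_hfr by (rule arg_cong[where f = "\<lambda>f. hfr f d"]) (simp add: fun_eq_iff)
    also have "\<dots> = 2 * of_int t * ?S + (of_int t)^2 * hfr (\<lambda>u. of_int (y u)) d"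
      unfolding hfr_delta sS using diag by simp
    finally show ?thesis .
  qed
  from this[of 1] this[of "-1"] eq[of 1] eq[of "-1"] show "?S = 0" by simp
qed

lemma E_sub: "Eface \<subseteq> Phi ` Bset"
proof
  fix d assume d: "d \<in> Eface"
  have sym: "\<forall>u v. d$u$v = d$v$u" and diag: "\<forall>v. d$v$v = 0" using d by (simp_all add: Eface_def in_hyp)
  have "d = Phi (Psi d)" using Phi_Psi[OF sym diag E_orth[OF d]] by simp
  moreover have "Psi d \<in> Bset" using Psi_Bset[OF sym diag E_orth[OF d]] .
  ultimately show "d \<in> Phi ` Bset" by blast
qed

end


context dl begin

lemma ell_bound: obtains Bb where "Bb > 0" "\<And>x. Bb * norm x \<le> norm (ell x)"
  using linear_inj_bounded_below_pos[OF linear_ell inj_ell] by blast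

lemma lat_rep: "X \<in> lattice_of_basis b \<Longrightarrow> \<exists>zz. X = ell (\<chi> i. of_int (zz i))"
  by (auto simp: lattice_of_basis_def ell_def)

lemma fin_ball: "finite {X \<in> lattice_of_basis b. norm X \<le> R}"
proof -
  obtain Bb where Bb: "Bb > 0" "\<And>x. Bb * norm x \<le> norm (ell x)" using ell_bound by blast
  define N where "N = \<lceil>R / Bb\<rceil>"
  have "{X \<in> lattice_of_basis b. norm X \<le> R} \<subseteq> (\<lambda>zz. ell (\<chi> i. of_int (zz i))) ` (Pi\<^sub>E UNIV (\<lambda>_. {-N..N}))"
  proof
    fix X assume X: "X \<in> {X \<in> lattice_of_basis b. norm X \<le> R}"
    then obtain zz where zz: "X = ell (\<chi> i. of_int (zz i))" using lat_rep by blast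
    have "Bb * norm (\<chi> i. (of_int (zz i)::real)) \<le> R" using Bb(2)[of "\<chi> i. of_int (zz i)"] X zz by simp
    then have nb: "norm (\<chi> i. (of_int (zz i)::real)) \<le> R / Bb" using Bb(1) by (simp add: field_simps)
    have "zz i \<in> {-N..N}" for i
    proof -
      have "\<bar>(of_int (zz i)::real)\<bar> \<le> R / Bb"
        using component_le_norm_cart[of "\<chi> i. (of_int (zz i)::real)" i] nb by simp
      then have "\<bar>(of_int (zz i)::real)\<bar> \<le> of_int N" unfolding N_def
        by (meson le_of_int_ceiling order_trans)
      then have "\<bar>zz i\<bar> \<le> N" by (simp flip: of_int_abs)
      then show ?thesis by auto
    qed
    then have "zz \<in> Pi\<^sub>E UNIV (\<lambda>_. {-N..N})" by (simp add: PiE_UNIV_domain)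
    then show "X \<in> (\<lambda>zz. ell (\<chi> i. of_int (zz i))) ` (Pi\<^sub>E UNIV (\<lambda>_. {-N..N}))" using zz by blast
  qed
  moreover have "finite (Pi\<^sub>E (UNIV::'n set) (\<lambda>_. {-N..N}))" by (rule finite_PiE) auto
  ultimately show ?thesis using finite_subset by blast
qed

lemma delta_pos: "\<exists>\<delta>>0. \<forall>X\<in>lattice_of_basis b. X \<notin> range vert \<longrightarrow> \<delta> \<le> (norm (X - c))\<^sup>2 - r\<^sup>2"
proof -
  define R where "R = norm c + sqrt (r\<^sup>2 + 1)"
  define T where "T = {X \<in> lattice_of_basis b. norm X \<le> R} - range vert"
  define f where "f X = (norm (X - c))\<^sup>2 - r\<^sup>2" for X
  have finT: "finite T" unfolding T_def using fin_ball by auto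
  have pos: "f X > 0" if "X \<in> lattice_of_basis b" "X \<notin> range vert" for X
  proof -
    have "r\<^sup>2 \<le> (norm (X - c))\<^sup>2" using empty that by blast
    moreover have "(norm (X - c))\<^sup>2 \<noteq> r\<^sup>2" using that Vdef by blast
    ultimately show ?thesis by (simp add: f_def)
  qed
  define \<delta> where "\<delta> = Min (insert 1 (f ` T))"
  have "\<delta> > 0" unfolding \<delta>_def using finT pos by (auto simp: T_def)
  moreover have "\<delta> \<le> f X" if "X \<in> lattice_of_basis b" "X \<notin> range vert" for X
  proof (cases "f X \<le> 1")
    case True
    then have "(norm (X - c))\<^sup>2 \<le> r\<^sup>2 + 1" by (simp add: f_def)
    then have "norm (X - c) \<le> sqrt (r\<^sup>2 + 1)" by (rule real_le_rsqrt)
    moreover have "norm X \<le> norm c + norm (X - c)" using norm_triangle_ineq[of c "X - c"] by simp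
    ultimately have "X \<in> T" using that by (simp add: T_def R_def)
    then show ?thesis unfolding \<delta>_def using finT by simp
  next
    case False
    have "\<delta> \<le> 1" unfolding \<delta>_def using finT by simp
    then show ?thesis using False by simp
  qed
  ultimately show ?thesis by (auto simp: f_def)
qed

lemma lattice_comb:
  assumes "sum \<beta> UNIV = 1"
  shows "(\<Sum>u\<in>UNIV. of_int (\<beta> u) *\<^sub>R vert u) = vert v0 + ell (\<Sum>u\<in>UNIV. of_int (\<beta> u) *\<^sub>R Zv u)"
proof -
  have "(\<Sum>u\<in>UNIV. of_int (\<beta> u) *\<^sub>R vert u) = (\<Sum>u\<in>UNIV. of_int (\<beta> u) *\<^sub>R vert v0 + of_int (\<beta> u) *\<^sub>R ell (Zv u))"
    by (rule sum.cong[OF refl]) (metis vert_eq scaleR_add_right)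
  also have "\<dots> = of_int (sum \<beta> UNIV) *\<^sub>R vert v0 + ell (\<Sum>u\<in>UNIV. of_int (\<beta> u) *\<^sub>R Zv u)"
    by (simp only: sum.distrib scaleR_sum_left[symmetric] of_int_sum[symmetric] linear_sum[OF linear_ell] linear_scale[OF linear_ell])
  finally show ?thesis using assms by simp
qed

lemma lattice_mem:
  "vert v0 + ell (\<Sum>u\<in>UNIV. of_int (\<beta> u) *\<^sub>R Zv u) \<in> lattice_of_basis b"
proof -
  obtain zz where zz: "vert v0 = (\<Sum>i\<in>UNIV. of_int (zz i) *\<^sub>R b i)"
    using vert_lat[of v0] by (auto simp: lattice_of_basis_def)
  have "vert v0 + ell (\<Sum>u\<in>UNIV. of_int (\<beta> u) *\<^sub>R Zv u) = (\<Sum>i\<in>UNIV. of_int (zz i + (\<Sum>u\<in>UNIV. \<beta> u * z u i)) *\<^sub>R b i)"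
    unfolding zz ell_def by (simp add: Zv_def scaleR_add_left sum.distrib)
  then have "\<exists>z'. vert v0 + ell (\<Sum>u\<in>UNIV. of_int (\<beta> u) *\<^sub>R Zv u) = (\<Sum>i\<in>UNIV. of_int (z' i) *\<^sub>R b i)"
    by (rule exI[where x = "\<lambda>i. zz i + (\<Sum>u\<in>UNIV. \<beta> u * z u i)"])
  then show ?thesis unfolding lattice_of_basis_def by simp
qed

end


lemma poly_bound:
  fixes n k a KB :: real
  assumes "n \<ge> 0" "a \<ge> 0" "KB \<ge> 0"
  shows "\<bar>k\<bar> + a * n + KB * n\<^sup>2 \<le> (\<bar>k\<bar> + a + KB + 1) * (1 + n\<^sup>2)"
proof -
  have "n \<le> 1 + n\<^sup>2"
  proof -
    have "0 \<le> (n - 1)\<^sup>2" by simp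
    moreover have "(n - 1)\<^sup>2 = n\<^sup>2 + 1 - 2 * n" by (simp add: power2_diff)
    moreover have "0 \<le> n\<^sup>2" by simp
    ultimately show ?thesis by linarith
  qed
  then have "a * n \<le> a * (1 + n\<^sup>2)" using assms by (simp add: mult_left_mono)
  moreover have "\<bar>k\<bar> \<le> \<bar>k\<bar> * (1 + n\<^sup>2)" using mult_nonneg_nonneg[of "\<bar>k\<bar>" "n\<^sup>2"] by (simp add: algebra_simps)
  moreover have "KB * n\<^sup>2 \<le> KB * (1 + n\<^sup>2)" using assms by (simp add: mult_left_mono)
  moreover have "(\<bar>k\<bar> + a + KB + 1) * (1 + n\<^sup>2) = \<bar>k\<bar> * (1 + n\<^sup>2) + a * (1 + n\<^sup>2) + KB * (1 + n\<^sup>2) + (1 + n\<^sup>2)"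
    by (simp add: algebra_simps)
  moreover have "0 \<le> 1 + n\<^sup>2" by simp
  ultimately show ?thesis by linarith
qed

lemma W_bound:
  fixes w R0 Bb s r :: real
  assumes "Bb > 0" "Bb * w \<le> x + R0" "w \<ge> 0" "x \<ge> 0" "R0 \<ge> 0" "s = x\<^sup>2 - r\<^sup>2" "s \<ge> 0"
  shows "1 + w\<^sup>2 \<le> (1 + 2 * (1 + r\<^sup>2 + R0\<^sup>2) / Bb\<^sup>2) * (1 + s)"
proof -
  have "w \<le> (x + R0) / Bb" using assms by (simp add: field_simps)
  then have "w\<^sup>2 \<le> ((x + R0) / Bb)\<^sup>2" using assms by (intro power_mono) auto
  also have "\<dots> = (x + R0)\<^sup>2 / Bb\<^sup>2" by (simp add: power_divide)
  also have "\<dots> \<le> 2 * (x\<^sup>2 + R0\<^sup>2) / Bb\<^sup>2"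
  proof -
    have "(x + R0)\<^sup>2 \<le> 2 * (x\<^sup>2 + R0\<^sup>2)"
    proof -
      have "0 \<le> (x - R0)\<^sup>2" by simp
      moreover have "(x - R0)\<^sup>2 = x\<^sup>2 + R0\<^sup>2 - 2 * x * R0" by (simp add: power2_diff)
      moreover have "(x + R0)\<^sup>2 = x\<^sup>2 + R0\<^sup>2 + 2 * x * R0" by (simp add: power2_sum)
      ultimately show ?thesis by (smt (verit))
    qed
    then show ?thesis using assms by (simp add: divide_right_mono)
  qed
  finally have w2: "w\<^sup>2 \<le> 2 * (s + r\<^sup>2 + R0\<^sup>2) / Bb\<^sup>2" using assms by simp
  define a where "a = 2 / Bb\<^sup>2"
  define m where "m = r\<^sup>2 + R0\<^sup>2"
  have a0: "a \<ge> 0" and m0: "m \<ge> 0" by (simp_all add: a_def m_def)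
  have w3: "w\<^sup>2 \<le> a * (s + m)" using w2 by (simp add: a_def m_def add.assoc)
  have "s + m \<le> (1 + m) * (1 + s)"
    using mult_nonneg_nonneg[OF m0 assms(7)] by (simp add: algebra_simps)
  then have "a * (s + m) \<le> a * ((1 + m) * (1 + s))" using a0 by (rule mult_left_mono)
  moreover have "(1 + 2 * (1 + r\<^sup>2 + R0\<^sup>2) / Bb\<^sup>2) * (1 + s) = (1 + s) + a * ((1 + m) * (1 + s))"
    by (simp add: a_def m_def algebra_simps add_divide_distrib)
  ultimately show ?thesis using w3 assms(7) by linarith
qed

context dl begin

lemma easy:
  assumes B: "B \<in> Bset"
  shows "\<exists>e>0. \<forall>\<epsilon>. 0 \<le> \<epsilon> \<and> \<epsilon> \<le> e \<longrightarrow> dP + \<epsilon> *\<^sub>R Phi B \<in> hyp_cone"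
proof -
  have tB: "transpose B = B" and orth: "\<forall>y\<in>Yset. (\<Sum>v\<in>UNIV. of_int (y v) * qf B (Zv v)) = 0"
    using B by (auto simp: Bset_alt)
  define g where "g u = qf B (Zv u)" for u
  define \<gamma> where "\<gamma> = (\<chi> k. g (sg k) - g s0)"
  define \<kappa> where "\<kappa> = g s0 - (L0 *v Zv s0) \<bullet> \<gamma>"
  define H where "H x = \<kappa> + (L0 *v x) \<bullet> \<gamma>" for x
  have Hg: "qf B (Zv u) = H (Zv u)" for u
  proof -
    have "g u = g s0 + (\<Sum>k\<in>UNIV. lam u $ k * (g (sg k) - g s0))"
      by (rule AFF) (use orth in \<open>simp add: g_def\<close>)
    also have "\<dots> = g s0 + lam u \<bullet> \<gamma>" by (simp add: inner_vec_def \<gamma>_def)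
    also have "\<dots> = H (Zv u)"
      by (simp add: H_def \<kappa>_def lam_def matrix_vector_mult_diff_distrib inner_diff_left)
    finally show ?thesis by (simp add: g_def)
  qed
  have Haff: "(\<Sum>u\<in>UNIV. \<beta> u * H (p u)) = H (\<Sum>u\<in>UNIV. \<beta> u *\<^sub>R p u)" if "sum \<beta> UNIV = 1" for \<beta> and p :: "'v \<Rightarrow> real^'n"
  proof -
    have "(\<Sum>u\<in>UNIV. \<beta> u * H (p u)) = sum \<beta> UNIV * \<kappa> + (\<Sum>u\<in>UNIV. \<beta> u * ((L0 *v p u) \<bullet> \<gamma>))"
      by (simp add: H_def algebra_simps sum.distrib sum_distrib_right sum_distrib_left)
    also have "(\<Sum>u\<in>UNIV. \<beta> u * ((L0 *v p u) \<bullet> \<gamma>)) = (L0 *v (\<Sum>u\<in>UNIV. \<beta> u *\<^sub>R p u)) \<bullet> \<gamma>"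
      by (simp add: mv_sum mv_scale inner_sum_left)
    finally show ?thesis using that by (simp add: H_def)
  qed
  obtain KL where KL: "KL > 0" "\<And>x. norm (L0 *v x) \<le> KL * norm x"
    using linear_bounded_pos[OF matrix_vector_mul_linear[of L0]] by blast
  obtain KB where KB: "KB > 0" "\<And>x. norm (B *v x) \<le> KB * norm x"
    using linear_bounded_pos[OF matrix_vector_mul_linear[of B]] by blast
  define K where "K = \<bar>\<kappa>\<bar> + KL * norm \<gamma> + KB + 1"
  have Kpos: "K > 0"
  proof -
    have "0 \<le> KL * norm \<gamma>" using KL by simp
    then show ?thesis unfolding K_def using KB by linarith
  qed
  have hbound: "\<bar>H x - qf B x\<bar> \<le> K * (1 + (norm x)\<^sup>2)" for x
  proof -
    have "\<bar>(L0 *v x) \<bullet> \<gamma>\<bar> \<le> norm (L0 *v x) * norm \<gamma>" by (rule Cauchy_Schwarz_ineq2)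
    also have "\<dots> \<le> KL * norm x * norm \<gamma>" using KL(2)[of x] by (simp add: mult_right_mono)
    finally have h1: "\<bar>H x\<bar> \<le> \<bar>\<kappa>\<bar> + (KL * norm \<gamma>) * norm x" unfolding H_def by (simp add: mult_ac)
    have "\<bar>qf B x\<bar> \<le> norm x * norm (B *v x)" unfolding qf_def by (rule Cauchy_Schwarz_ineq2)
    also have "\<dots> \<le> norm x * (KB * norm x)" using KB(2)[of x] by (simp add: mult_left_mono)
    finally have h2: "\<bar>qf B x\<bar> \<le> KB * (norm x)\<^sup>2" by (simp add: power2_eq_square mult_ac)
    have "\<bar>H x - qf B x\<bar> \<le> \<bar>\<kappa>\<bar> + (KL * norm \<gamma>) * norm x + KB * (norm x)\<^sup>2" using h1 h2 by linarith
    also have "\<dots> \<le> K * (1 + (norm x)\<^sup>2)" unfolding K_def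
      by (rule poly_bound) (use KL KB in auto)
    finally show ?thesis .
  qed
  obtain Bb where Bb: "Bb > 0" "\<And>x. Bb * norm x \<le> norm (ell x)" using ell_bound by blast
  define R0 where "R0 = norm (c - vert v0)"
  define K' where "K' = 1 + 2 * (1 + r\<^sup>2 + R0\<^sup>2) / Bb\<^sup>2"
  obtain \<delta> where \<delta>: "\<delta> > 0" "\<And>X. X \<in> lattice_of_basis b \<Longrightarrow> X \<notin> range vert \<Longrightarrow> \<delta> \<le> (norm (X - c))\<^sup>2 - r\<^sup>2"
    using delta_pos by blast
  define M where "M = K * K'"
  have K'pos: "K' > 0" unfolding K'_def using Bb by (simp add: add_pos_nonneg)
  have Mpos: "M > 0" unfolding M_def using Kpos K'pos by simp
  define e where "e = \<delta> / (M * (1 + \<delta>))"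
  have epos: "e > 0" unfolding e_def using \<delta> Mpos by simp
  have main: "dP + \<epsilon> *\<^sub>R Phi B \<in> hyp_cone" if \<epsilon>: "0 \<le> \<epsilon>" "\<epsilon> \<le> e" for \<epsilon>
  proof -
    have sym: "\<forall>u v. (dP + \<epsilon> *\<^sub>R Phi B)$u$v = (dP + \<epsilon> *\<^sub>R Phi B)$v$u"
    proof (intro allI)
      fix u v
      have "Zv v - Zv u = - (Zv u - Zv v)" by simp
      then have "qf B (Zv v - Zv u) = qf B (Zv u - Zv v)" by (metis qf_neg)
      then show "(dP + \<epsilon> *\<^sub>R Phi B)$u$v = (dP + \<epsilon> *\<^sub>R Phi B)$v$u"
        by (simp add: delaunay_distance_def Phi_def norm_minus_commute)
    qed
    have diag: "\<forall>v. (dP + \<epsilon> *\<^sub>R Phi B)$v$v = 0"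
      by (simp add: delaunay_distance_def Phi_def qf_def)
    have hyp: "hf \<beta> (dP + \<epsilon> *\<^sub>R Phi B) \<le> 0" if s1: "sum \<beta> UNIV = 1" for \<beta> :: "'v \<Rightarrow> int"
    proof -
      define W where "W = (\<Sum>u\<in>UNIV. of_int (\<beta> u) *\<^sub>R Zv u)"
      define X where "X = (\<Sum>u\<in>UNIV. of_int (\<beta> u) *\<^sub>R vert u)"
      define s where "s = (norm (X - c))\<^sup>2 - r\<^sup>2"
      have XW: "X = vert v0 + ell W" unfolding X_def W_def by (rule lattice_comb[OF s1])
      have XL: "X \<in> lattice_of_basis b" unfolding XW W_def by (rule lattice_mem)
      have rX: "r\<^sup>2 \<le> (norm (X - c))\<^sup>2" using empty XL by blast
      then have s0': "s \<ge> 0" by (simp add: s_def)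
      have sb: "(\<Sum>u\<in>UNIV. real_of_int (\<beta> u)) = 1" using s1 by (simp flip: of_int_sum)
      have e1: "hf \<beta> (dP + \<epsilon> *\<^sub>R Phi B) = hf \<beta> dP + \<epsilon> * hf \<beta> (Phi B)"
        by (simp add: hf_hfr hfr_add hfr_scale)
      have e2: "hf \<beta> dP = - 2 * s" using hf_dP[OF s1] by (simp add: s_def X_def)
      have e3: "hf \<beta> (Phi B) = 2 * (H W - qf B W)"
      proof -
        have "hf \<beta> (Phi B) = 2 * (\<Sum>u\<in>UNIV. of_int (\<beta> u) * H (Zv u)) - 2 * qf B W"
          using hf_Phi[OF tB s1] by (simp add: Hg W_def)
        also have "(\<Sum>u\<in>UNIV. of_int (\<beta> u) * H (Zv u)) = H W" unfolding W_def by (rule Haff[OF sb])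
        finally show ?thesis by simp
      qed
      have key: "\<epsilon> * (H W - qf B W) \<le> s"
      proof (cases "X \<in> range vert")
        case True
        then obtain u where u: "X = vert u" by blast
        then have "ell W = ell (Zv u)" using XW vert_eq[of u] by simp
        then have "W = Zv u" using inj_ell by (simp add: inj_eq)
        then have "H W - qf B W = 0" using Hg[of u] by simp
        then show ?thesis using s0' by simp
      next
        case False
        have sd: "\<delta> \<le> s" using \<delta>(2)[OF XL False] by (simp add: s_def)
        have "Bb * norm W \<le> norm (X - vert v0)" using Bb(2)[of W] XW by simp
        also have "\<dots> \<le> norm (X - c) + R0" unfolding R0_def using norm_triangle_ineq[of "X - c" "c - vert v0"] by simp
        finally have "1 + (norm W)\<^sup>2 \<le> K' * (1 + s)" unfolding K'_def
          by (rule W_bound[OF Bb(1)]) (use rX in \<open>simp_all add: R0_def s_def\<close>)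
        then have "\<bar>H W - qf B W\<bar> \<le> M * (1 + s)"
          using hbound[of W] Kpos unfolding M_def
          by (metis (no_types, opaque_lifting) mult.assoc mult_left_mono order_trans less_le)
        then have "\<epsilon> * (H W - qf B W) \<le> e * (M * (1 + s))"
          using \<epsilon> s0' Mpos
          by (meson abs_le_D1 mult_left_mono mult_right_mono order_trans add_nonneg_nonneg zero_le_one mult_nonneg_nonneg less_imp_le)
        also have "\<dots> = \<delta> * (1 + s) / (1 + \<delta>)"
        proof -
          have "M \<noteq> 0" "1 + \<delta> \<noteq> 0" using Mpos \<delta>(1) by auto
          have "e * (M * (1 + s)) = (M * (\<delta> * (1 + s))) / (M * (1 + \<delta>))"
            unfolding e_def by (simp add: mult_ac)
          also have "\<dots> = \<delta> * (1 + s) / (1 + \<delta>)" using \<open>M \<noteq> 0\<close> by (rule nonzero_mult_divide_mult_cancel_left)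
          finally show ?thesis .
        qed
        also have "\<dots> \<le> s" using sd \<delta> by (simp add: field_simps)
        finally show ?thesis .
      qed
      have "hf \<beta> (dP + \<epsilon> *\<^sub>R Phi B) = -2 * s + 2 * (\<epsilon> * (H W - qf B W))"
        using e1 e2 e3 by (simp add: algebra_simps)
      then show ?thesis using key by linarith
    qed
    show ?thesis unfolding in_hyp using sym diag hyp by blast
  qed
  show ?thesis using epos main by blast
qed

end


lemma mscale_mv: "((a::real) *\<^sub>R B) *v x = a *\<^sub>R (B *v (x::real^'n))"
  by (simp add: vec_eq_iff matrix_vector_mult_def sum_distrib_left mult_ac)

lemma qf_add: "qf (A + B) x = qf A x + qf B x"
  by (simp add: qf_def matrix_vector_mult_add_rdistrib inner_add_right)

lemma qf_scale: "qf (a *\<^sub>R B) x = a * qf B x"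
  by (simp add: qf_def mscale_mv)

context dl begin

lemma linear_Phi: "linear Phi"
  by (rule linearI) (simp_all add: Phi_def vec_eq_iff qf_add qf_scale)

lemma subspace_Bset: "subspace Bset"
  unfolding subspace_def Bset_alt
proof (intro conjI ballI allI)
  show "0 \<in> {B. transpose B = B \<and> (\<forall>y\<in>Yset. (\<Sum>v\<in>UNIV. of_int (y v) * qf B (Zv v)) = 0)}"
    by (simp add: transpose_def vec_eq_iff qf_def)
next
  fix A B assume A: "A \<in> {B. transpose B = B \<and> (\<forall>y\<in>Yset. (\<Sum>v\<in>UNIV. of_int (y v) * qf B (Zv v)) = 0)}"
    and B: "B \<in> {B. transpose B = B \<and> (\<forall>y\<in>Yset. (\<Sum>v\<in>UNIV. of_int (y v) * qf B (Zv v)) = 0)}"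
  have tA: "transpose A = A" and tB: "transpose B = B" using A B by auto
  have "transpose (A + B) = transpose A + transpose B" by (simp add: transpose_def vec_eq_iff)
  then have "transpose (A + B) = A + B" using tA tB by simp
  moreover have "(\<Sum>v\<in>UNIV. of_int (y v) * qf (A + B) (Zv v)) = 0" if "y \<in> Yset" for y
    using A B that by (simp add: qf_add distrib_left sum.distrib)
  ultimately show "A + B \<in> {B. transpose B = B \<and> (\<forall>y\<in>Yset. (\<Sum>v\<in>UNIV. of_int (y v) * qf B (Zv v)) = 0)}" by simp
next
  fix a :: real and B assume B: "B \<in> {B. transpose B = B \<and> (\<forall>y\<in>Yset. (\<Sum>v\<in>UNIV. of_int (y v) * qf B (Zv v)) = 0)}"
  have tB: "transpose B = B" using B by auto
  have "transpose (a *\<^sub>R B) = a *\<^sub>R transpose B" by (simp add: transpose_def vec_eq_iff)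
  then have "transpose (a *\<^sub>R B) = a *\<^sub>R B" using tB by simp
  moreover have "(\<Sum>v\<in>UNIV. of_int (y v) * qf (a *\<^sub>R B) (Zv v)) = 0" if "y \<in> Yset" for y
  proof -
    have "(\<Sum>v\<in>UNIV. of_int (y v) * qf (a *\<^sub>R B) (Zv v)) = a * (\<Sum>v\<in>UNIV. of_int (y v) * qf B (Zv v))"
      by (simp add: qf_scale sum_distrib_left mult_ac)
    then show ?thesis using B that by simp
  qed
  ultimately show "a *\<^sub>R B \<in> {B. transpose B = B \<and> (\<forall>y\<in>Yset. (\<Sum>v\<in>UNIV. of_int (y v) * qf B (Zv v)) = 0)}" by simp
qed

lemma easy2:
  assumes "B \<in> Bset"
  shows "\<exists>e>0. dP + e *\<^sub>R Phi B \<in> hyp_cone \<and> dP - e *\<^sub>R Phi B \<in> hyp_cone"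
proof -
  have nB: "- B \<in> Bset" using subspace_Bset assms by (rule subspace_neg)
  obtain e1 where e1: "e1 > 0" "\<And>\<epsilon>. 0 \<le> \<epsilon> \<and> \<epsilon> \<le> e1 \<longrightarrow> dP + \<epsilon> *\<^sub>R Phi B \<in> hyp_cone"
    using easy[OF assms] by blast
  obtain e2 where e2: "e2 > 0" "\<And>\<epsilon>. 0 \<le> \<epsilon> \<and> \<epsilon> \<le> e2 \<longrightarrow> dP + \<epsilon> *\<^sub>R Phi (- B) \<in> hyp_cone"
    using easy[OF nB] by blast
  have "Phi (- B) = - Phi B" using linear_Phi by (rule linear_neg)
  then have "dP - min e1 e2 *\<^sub>R Phi B \<in> hyp_cone" using e2(2)[of "min e1 e2"] e2(1) e1(1) by simp
  moreover have "dP + min e1 e2 *\<^sub>R Phi B \<in> hyp_cone" using e1(2)[of "min e1 e2"] e2(1) e1(1) by simp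
  ultimately show ?thesis using e1(1) e2(1) by (intro exI[of _ "min e1 e2"]) simp
qed

lemma hf_comb: "hf \<beta> (u *\<^sub>R x + v *\<^sub>R y) = u * hf \<beta> x + v * hf \<beta> y"
  by (simp add: hf_hfr hfr_add hfr_scale)

lemma convex_hyp: "convex (hyp_cone :: (real^'v^'v) set)"
  unfolding convex_def
proof (intro ballI allI impI)
  fix x y :: "real^'v^'v" and u v :: real assume x: "x \<in> hyp_cone" and y: "y \<in> hyp_cone" and uv: "0 \<le> u" "0 \<le> v" "u + v = 1"
  show "u *\<^sub>R x + v *\<^sub>R y \<in> hyp_cone"
    unfolding in_hyp
  proof (intro conjI allI impI)
    fix a bb show "(u *\<^sub>R x + v *\<^sub>R y) $ a $ bb = (u *\<^sub>R x + v *\<^sub>R y) $ bb $ a" using x y by (simp add: in_hyp)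
  next
    fix a show "(u *\<^sub>R x + v *\<^sub>R y) $ a $ a = 0" using x y by (simp add: in_hyp)
  next
    fix \<beta> :: "'v \<Rightarrow> int" assume "sum \<beta> UNIV = 1"
    then have "hf \<beta> x \<le> 0" "hf \<beta> y \<le> 0" using x y by (auto simp: in_hyp)
    then show "hf \<beta> (u *\<^sub>R x + v *\<^sub>R y) \<le> 0" unfolding hf_comb using uv
      by (simp add: add_nonpos_nonpos mult_nonneg_nonpos)
  qed
qed

lemma dP_hyp: "dP \<in> hyp_cone"
proof -
  have "0 \<in> Bset" using subspace_Bset by (rule subspace_0)
  then obtain e where e: "e > 0" "\<And>\<epsilon>. 0 \<le> \<epsilon> \<and> \<epsilon> \<le> e \<longrightarrow> dP + \<epsilon> *\<^sub>R Phi 0 \<in> hyp_cone"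
    using easy by blast
  then have "dP + 0 *\<^sub>R Phi 0 \<in> hyp_cone" using e(2)[of 0] by simp
  then show ?thesis by simp
qed

lemma dP_E: "dP \<in> Eface"
  using dP_hyp by (simp add: Eface_def)

lemma E_face: "Eface face_of hyp_cone"
  unfolding face_of_def
proof (intro conjI)
  show "Eface \<subseteq> hyp_cone" by (auto simp: Eface_def)
next
  show "convex Eface"
    unfolding convex_def
  proof (intro ballI allI impI)
    fix x y and u v :: real assume x: "x \<in> Eface" and y: "y \<in> Eface" and uv: "0 \<le> u" "0 \<le> v" "u + v = 1"
    have "u *\<^sub>R x + v *\<^sub>R y \<in> hyp_cone" using x y uv convex_hyp unfolding convex_def Eface_def by blast
    moreover have "hf \<beta> (u *\<^sub>R x + v *\<^sub>R y) = 0" if "sum \<beta> UNIV = 1 \<and> hf \<beta> dP = 0" for \<beta>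
      using x y that unfolding hf_comb Eface_def by simp
    ultimately show "u *\<^sub>R x + v *\<^sub>R y \<in> Eface" by (simp add: Eface_def)
  qed
next
  show "\<forall>a\<in>hyp_cone. \<forall>bb\<in>hyp_cone. \<forall>x\<in>Eface. x \<in> open_segment a bb \<longrightarrow> a \<in> Eface \<and> bb \<in> Eface"
  proof (intro ballI impI)
  fix a bb x assume a: "a \<in> hyp_cone" and bb: "bb \<in> hyp_cone" and x: "x \<in> Eface" and xs: "x \<in> open_segment a bb"
  from xs obtain u where u: "0 < u" "u < 1" "x = (1 - u) *\<^sub>R a + u *\<^sub>R bb" by (auto simp: in_segment)
  have "hf \<beta> a = 0 \<and> hf \<beta> bb = 0" if \<beta>: "sum \<beta> UNIV = 1 \<and> hf \<beta> dP = 0" for \<beta>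
  proof -
    have "hf \<beta> a \<le> 0" "hf \<beta> bb \<le> 0" using a bb \<beta> by (auto simp: in_hyp)
    moreover have "(1 - u) * hf \<beta> a + u * hf \<beta> bb = 0" using x \<beta> u(3) hf_comb[of \<beta> "1 - u" a u bb] by (simp add: Eface_def)
    moreover have "(1 - u) * hf \<beta> a \<le> 0" "u * hf \<beta> bb \<le> 0" using calculation u by (simp_all add: mult_nonneg_nonpos)
    ultimately have "(1 - u) * hf \<beta> a = 0" "u * hf \<beta> bb = 0" by linarith+
    then show ?thesis using u by simp
  qed
  then show "a \<in> Eface \<and> bb \<in> Eface" using a bb by (simp add: Eface_def)
  qed
qed

lemma minface:
  shows "minimal_face hyp_cone dP face_of hyp_cone" "dP \<in> minimal_face hyp_cone dP"
    "minimal_face hyp_cone dP \<subseteq> Eface"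
proof -
  define FF where "FF = {G. G face_of hyp_cone \<and> dP \<in> G}"
  have EF: "Eface \<in> FF" using E_face dP_E by (simp add: FF_def)
  have f0: "\<Inter>FF face_of hyp_cone" by (rule face_of_Inter) (use EF in \<open>auto simp: FF_def\<close>)
  have d0: "dP \<in> \<Inter>FF" by (simp add: FF_def)
  have "minimal_face hyp_cone dP = \<Inter>FF"
    unfolding minimal_face_def
  proof (rule the_equality)
    show "\<Inter>FF face_of hyp_cone \<and> dP \<in> \<Inter>FF \<and> (\<forall>G. G face_of hyp_cone \<and> dP \<in> G \<longrightarrow> \<Inter>FF \<subseteq> G)"
      using f0 d0 by (auto simp: FF_def)
  next
    fix F assume F: "F face_of hyp_cone \<and> dP \<in> F \<and> (\<forall>G. G face_of hyp_cone \<and> dP \<in> G \<longrightarrow> F \<subseteq> G)"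
    then have "F \<subseteq> \<Inter>FF" by (auto simp: FF_def)
    moreover have "\<Inter>FF \<subseteq> F" using F by (auto simp: FF_def)
    ultimately show "F = \<Inter>FF" by blast
  qed
  then show "minimal_face hyp_cone dP face_of hyp_cone" "dP \<in> minimal_face hyp_cone dP"
    "minimal_face hyp_cone dP \<subseteq> Eface" using f0 d0 EF by auto
qed

theorem dim_main: "dim Bset = delaunay_rank vert"
proof -
  let ?F = "minimal_face hyp_cone dP"
  have s1: "span ?F \<subseteq> Phi ` Bset"
  proof (rule span_minimal)
    show "?F \<subseteq> Phi ` Bset" using minface(3) E_sub by blast
    show "subspace (Phi ` Bset)" by (rule linear_subspace_image[OF linear_Phi subspace_Bset])
  qed
  have s2: "Phi ` Bset \<subseteq> span ?F"
  proof
    fix d assume "d \<in> Phi ` Bset"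
    then obtain B where B: "B \<in> Bset" "d = Phi B" by blast
    obtain e where e: "e > 0" "dP + e *\<^sub>R d \<in> hyp_cone" "dP - e *\<^sub>R d \<in> hyp_cone"
      using easy2[OF B(1)] B(2) by blast
    show "d \<in> span ?F"
    proof (cases "d = 0")
      case True then show ?thesis by (simp add: span_0)
    next
      case False
      have "(dP + e *\<^sub>R d) + (dP - e *\<^sub>R d) = dP + dP" by (simp add: algebra_simps)
      then have "midpoint (dP + e *\<^sub>R d) (dP - e *\<^sub>R d) = dP" by (simp only: midpoint_eq_iff)
      then have "dP = midpoint (dP + e *\<^sub>R d) (dP - e *\<^sub>R d)" by simp
      moreover have "dP + e *\<^sub>R d \<noteq> dP - e *\<^sub>R d"
      proof
        assume eq: "dP + e *\<^sub>R d = dP - e *\<^sub>R d"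
        have x: "e *\<^sub>R d = - (e *\<^sub>R d)" using eq by (metis add_left_cancel diff_conv_add_uminus)
        have "(e + e) *\<^sub>R d = 0" by (metis x scaleR_add_left right_minus)
        then show False using False e(1) by simp
      qed
      ultimately have "dP \<in> open_segment (dP + e *\<^sub>R d) (dP - e *\<^sub>R d)" by (metis midpoint_in_open_segment)
      then have "dP + e *\<^sub>R d \<in> ?F" using face_ofD[OF minface(1) _ e(2) e(3) minface(2)] by blast
      then have "(dP + e *\<^sub>R d) - dP \<in> span ?F" using minface(2) by (intro span_diff span_base)
      then have "(1 / e) *\<^sub>R ((dP + e *\<^sub>R d) - dP) \<in> span ?F" by (rule span_mul)
      then show ?thesis using e(1) by simp
    qed
  qed
  have "span ?F = Phi ` Bset" using s1 s2 by blast
  moreover have "dim ?F = dim (span ?F)" by (rule dim_span[symmetric])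
  ultimately have "dim ?F = dim (Phi ` Bset)" by simp
  also have "\<dots> = dim Bset"
  proof (rule dim_image_eq[OF linear_Phi])
    have sB: "span Bset = Bset" using subspace_Bset by (simp only: span_eq_iff)
    show "inj_on Phi (span Bset)" unfolding sB by (rule inj_Phi)
  qed
  finally show ?thesis by (simp add: delaunay_rank_def)
qed

end


lemma ell_inj_lemma:
  fixes b :: "'n::finite \<Rightarrow> real^'n"
  assumes ind: "independent (range b)" and ib: "inj b"
  shows "inj (\<lambda>x::real^'n. \<Sum>i\<in>UNIV. x$i *\<^sub>R b i)"
proof -
  have lin: "linear (\<lambda>x::real^'n. \<Sum>i\<in>UNIV. x$i *\<^sub>R b i)"
    by (rule linearI) (simp_all add: scaleR_add_left sum.distrib scaleR_sum_right)
  have "x = 0" if x0: "(\<Sum>i\<in>UNIV. x$i *\<^sub>R b i) = 0" for x :: "real^'n"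
  proof -
    define cc where "cc v = x $ (inv b v)" for v
    have "(\<Sum>v\<in>range b. cc v *\<^sub>R v) = (\<Sum>i\<in>UNIV. cc (b i) *\<^sub>R b i)"
      using ib by (simp add: sum.reindex)
    also have "\<dots> = 0" using x0 ib by (simp add: cc_def)
    finally have "\<forall>v\<in>range b. cc v = 0" using ind by (simp add: independent_explicit)
    then have "x $ i = 0" for i using ib by (auto simp: cc_def)
    then show ?thesis by (simp add: vec_eq_iff)
  qed
  then show ?thesis using lin by (simp add: linear_injective_0)
qed

lemma indep_cols:
  fixes A :: "real^'n::finite^'n" and g :: "real^'n \<Rightarrow> 'a::euclidean_space"
  assumes lin: "linear g" and S: "\<not> affine_dependent S" "p0 \<in> S"
    and f: "bij_betw f (UNIV::'n set) (S - {p0})"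
    and col: "\<And>k. g (column k A) = f k - p0"
  shows "inj ((*v) A)"
proof -
  have "w = 0" if w0: "A *v w = 0" for w
  proof -
    have "g (A *v w) = (\<Sum>k\<in>UNIV. w$k *\<^sub>R (f k - p0))"
      unfolding matrix_mult_sum scalar_mult_eq_scaleR linear_sum[OF lin] linear_scale[OF lin] col ..
    then have sum0: "(\<Sum>k\<in>UNIV. w$k *\<^sub>R (f k - p0)) = 0" using w0 linear_0[OF lin] by simp
    define T where "T = (\<lambda>x. -p0 + x) ` (S - {p0})"
    have "insert p0 (S - {p0}) = S" using S(2) by blast
    then have indT: "independent T" using S(1) affine_dependent_iff_dependent[of p0 "S - {p0}"] by (simp add: T_def)
    define h where "h k = -p0 + f k" for k
    have ih: "inj h" using f by (auto simp: h_def bij_betw_def inj_on_def)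
    have fU: "S - {p0} = f ` UNIV" using f by (simp add: bij_betw_def)
    have hT: "h ` UNIV = T" unfolding T_def h_def fU image_image ..
    define cc where "cc v = w $ (inv h v)" for v
    have "(\<Sum>v\<in>T. cc v *\<^sub>R v) = (\<Sum>k\<in>UNIV. cc (h k) *\<^sub>R h k)"
      unfolding hT[symmetric] using ih by (simp add: sum.reindex)
    also have "\<dots> = (\<Sum>k\<in>UNIV. w$k *\<^sub>R (f k - p0))"
    proof -
      have "cc (h k) = w$k" for k using ih by (simp add: cc_def)
      then show ?thesis by (simp add: h_def)
    qed
    finally have sT: "(\<Sum>v\<in>T. cc v *\<^sub>R v) = 0" using sum0 by simp
    have ie: "\<forall>c. (\<Sum>v\<in>T. c v *\<^sub>R v) = 0 \<longrightarrow> (\<forall>v\<in>T. c v = 0)" using indT by (simp add: independent_explicit)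
    have "\<forall>v\<in>T. cc v = 0" using ie sT by blast
    then have "w $ k = 0" for k using ih hT by (auto simp: cc_def)
    then show ?thesis by (simp add: vec_eq_iff)
  qed
  then show ?thesis by (simp add: linear_injective_0[OF matrix_vector_mul_linear])
qed

theorem mainTheorem2:
  fixes b :: "'n::finite \<Rightarrow> real^'n"
    and vert :: "'v::finite \<Rightarrow> real^'n"
    and v0 :: 'v
    and z :: "'v \<Rightarrow> 'n \<Rightarrow> int"
  assumes basis_indep: "independent (range b)"
    and basis_inj: "inj b"
    and vert_inj: "inj vert"
    and delaunay: "delaunay_polytope_vertices (lattice_of_basis b) (range vert)"
    and generates: "lattice_of_basis b = int_span {u - w | u w. u \<in> range vert \<and> w \<in> range vert}"
    and coords: "\<forall>v. vert v - vert v0 = (\<Sum>i\<in>UNIV. of_int (z v i) *\<^sub>R b i)"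
  shows "dim {B :: real^'n^'n. transpose B = B \<and>
            (\<forall>y::'v \<Rightarrow> int. (\<Sum>v\<in>UNIV. of_int (y v) *\<^sub>R vert v) = 0 \<and> sum y UNIV = 0 \<longrightarrow>
               (\<Sum>i\<in>UNIV. \<Sum>j\<in>UNIV. (\<Sum>v\<in>UNIV. of_int (y v * z v i * z v j)) * B$i$j) = 0)}
         = delaunay_rank vert"
proof -
  obtain c r where cr: "(\<forall>a\<in>lattice_of_basis b. (norm (a - c))\<^sup>2 \<ge> r\<^sup>2) \<and>
            range vert = {a\<in>lattice_of_basis b. (norm (a - c))\<^sup>2 = r\<^sup>2} \<and>
            (\<exists>S\<subseteq>range vert. card S = CARD('n) + 1 \<and> \<not> affine_dependent S)"
    using delaunay unfolding delaunay_polytope_vertices_def by (elim exE) (rule that)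
  have emp: "\<forall>a\<in>lattice_of_basis b. r\<^sup>2 \<le> (norm (a - c))\<^sup>2" using conjunct1[OF cr] by simp
  have Vd: "range vert = {a\<in>lattice_of_basis b. (norm (a - c))\<^sup>2 = r\<^sup>2}" using conjunct1[OF conjunct2[OF cr]] .
  have "\<exists>S\<subseteq>range vert. card S = CARD('n) + 1 \<and> \<not> affine_dependent S" using conjunct2[OF conjunct2[OF cr]] .
  then obtain S where S: "S \<subseteq> range vert" "card S = CARD('n) + 1" "\<not> affine_dependent S"
    by (elim exE conjE) (rule that)
  have finS: "finite S" by (rule finite_subset[OF S(1)]) simp
  then have "S \<noteq> {}" using S(2) by auto
  then obtain p0 where p0: "p0 \<in> S" by blast
  have "card (S - {p0}) = CARD('n)" using S(2) p0 finS by simp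
  then have cc: "card (UNIV::'n set) = card (S - {p0})" by simp
  obtain f where f: "bij_betw f (UNIV::'n set) (S - {p0})"
    using finite_same_card_bij[OF finite finite_Diff[OF finS] cc] by (elim exE) (rule that)
  obtain s0 where s0: "vert s0 = p0" using p0 S(1) by blast
  have "\<forall>k. \<exists>v. vert v = f k"
  proof
    fix k have "f k \<in> S" using bij_betwE[OF f] by blast
    then have "f k \<in> range vert" using S(1) by (rule subsetD[rotated])
    then show "\<exists>v. vert v = f k" by (metis rangeE)
  qed
  then obtain sg where sg: "\<And>k. vert (sg k) = f k" by metis
  define ell where "ell x = (\<Sum>i\<in>UNIV. x$i *\<^sub>R b i)" for x :: "real^'n"
  have lin: "linear ell" unfolding ell_def[abs_def]
    by (rule linearI) (simp_all add: scaleR_add_left sum.distrib scaleR_sum_right)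
  define A where "A = (\<chi> i k. real_of_int (z (sg k) i) - real_of_int (z s0 i))"
  have "ell (column k A) = f k - p0" for k
  proof -
    have "ell (column k A) = (\<Sum>i\<in>UNIV. of_int (z (sg k) i) *\<^sub>R b i) - (\<Sum>i\<in>UNIV. of_int (z s0 i) *\<^sub>R b i)"
      by (simp add: ell_def column_def A_def scaleR_diff_left sum_subtractf)
    also have "\<dots> = (vert (sg k) - vert v0) - (vert s0 - vert v0)" using coords by simp
    finally show ?thesis using sg s0 by simp
  qed
  then have "inj ((*v) A)" by (intro indep_cols[OF lin S(3) p0 f])
  then have "invertible A"
    by (simp add: invertible_left_inverse matrix_left_invertible_injective)
  then obtain L0 where L0: "A ** L0 = mat 1" "L0 ** A = mat 1" unfolding invertible_def by blast
  interpret D: dl b vert v0 z c r s0 sg L0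
  proof
    show "inj (\<lambda>x::real^'n. \<Sum>i\<in>UNIV. x$i *\<^sub>R b i)" by (rule ell_inj_lemma[OF basis_indep basis_inj])
    show "\<forall>v. vert v - vert v0 = (\<Sum>i\<in>UNIV. of_int (z v i) *\<^sub>R b i)" by (rule coords)
    show "\<forall>a\<in>lattice_of_basis b. r\<^sup>2 \<le> (norm (a - c))\<^sup>2" by (rule emp)
    show "range vert = {a\<in>lattice_of_basis b. (norm (a - c))\<^sup>2 = r\<^sup>2}" by (rule Vd)
    show "L0 ** (\<chi> i k. of_int (z (sg k) i) - of_int (z s0 i)) = mat 1" using L0 by (simp add: A_def)
    show "(\<chi> i k. of_int (z (sg k) i) - of_int (z s0 i)) ** L0 = mat 1" using L0 by (simp add: A_def)
  qed
  show ?thesis using D.dim_main unfolding D.Bset_def .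
qed


end
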